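(* Let $L$ be a subspace of $\bigwedge^kV$, let $1\le i<j\le n$, and suppose $L$ is monomial with respect to $e_j$, i.e. $L=\big(L\cap\bigwedge^{k}V^{(j)}\big)\oplus\big(L\cap(e_{j}\wedge\bigwedge^{k-1}V^{(j)})\big)$. Then for each $x\in\bigwedge^{k-1}V^{(j)}$ with $e_j\wedge x\in N_{j\to i}L$, it also holds that $e_i\wedge x\in N_{j\to i}L$.
   Context: $\mathbb{F}$ is a field (assumed throughout the paper, for expository purposes, to have characteristic not $2$), $V$ is an $n$-dimensional $\mathbb{F}$-vector space with a fixed basis $e_1,\dots,e_n$, and $\bigwedge V$ its exterior algebra. For $j\in[n]$, $V^{(j)}$ is the span of $\{e_h:h\neq j\}$, and $\bigwedge V^{(j)}$ is viewed as a subalgebra of $\bigwedge V$. Slow shift: for distinct $i,j\in[n]$ and nonzero $m\in\bigwedge^kV$, write uniquely $m=x'+e_j\wedge y'$ with $x'\in\bigwedge^kV^{(j)}$, $y'\in\bigwedge^{k-1}V^{(j)}$, and set $N_{j\to i}m=x'+e_i\wedge y'$ if this is nonzero, and $N_{j\to i}m=e_j\wedge y'$ otherwise (the limit as $t\to0$ of the projective action of the linear map $e_j\mapsto e_i+te_j$ fixing the other $e_h$). For a subspace $L$ of $\bigwedge^kV$, $N_{j\to i}L$ is the span of $\{N_{j\to i}m:m\in L\setminus\{0\}\}$. *)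

theory Defs
  imports Main
begin

text \<open>Exterior algebra of V = F^n with basis e_1..e_n, in coordinates:
  an element is a coefficient function on subsets S of {1..n}, the coefficient
  of e_S = e_{s_1} wedge ... wedge e_{s_p} (s_1 < ... < s_p).\<close>

type_synonym 'a ext = "nat set \<Rightarrow> 'a"

definition vzero :: "'a::field ext" where "vzero = (\<lambda>S. 0)"
definition vadd :: "'a::field ext \<Rightarrow> 'a ext \<Rightarrow> 'a ext" where
  "vadd x y = (\<lambda>S. x S + y S)"
definition vscale :: "'a::field \<Rightarrow> 'a ext \<Rightarrow> 'a ext" where
  "vscale c x = (\<lambda>S. c * x S)"

text \<open>The exterior algebra of V (all degrees), its k-th graded piece, and the
  k-th graded piece of the exterior algebra of V^(j) = span{e_h : h ~= j}.\<close>
definition Ext :: "nat \<Rightarrow> 'a::field ext set" where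
  "Ext n = {m. \<forall>S. m S \<noteq> 0 \<longrightarrow> S \<subseteq> {1..n}}"
definition Extk :: "nat \<Rightarrow> nat \<Rightarrow> 'a::field ext set" where
  "Extk n k = {m \<in> Ext n. \<forall>S. m S \<noteq> 0 \<longrightarrow> card S = k}"
definition Extkj :: "nat \<Rightarrow> nat \<Rightarrow> nat \<Rightarrow> 'a::field ext set" where
  "Extkj n k j = {m \<in> Extk n k. \<forall>S. m S \<noteq> 0 \<longrightarrow> j \<notin> S}"

text \<open>Sign of e_S wedge e_T relative to e_{S union T} (S, T disjoint).\<close>
definition wsign :: "nat set \<Rightarrow> nat set \<Rightarrow> 'a::field" where
  "wsign S T = (-1) ^ card {(s, t). s \<in> S \<and> t \<in> T \<and> t < s}"

definition wedge :: "'a::field ext \<Rightarrow> 'a ext \<Rightarrow> 'a ext" where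
  "wedge x y = (\<lambda>U. \<Sum>S\<in>Pow U. wsign S (U - S) * x S * y (U - S))"

definition basis_vec :: "nat \<Rightarrow> 'a::field ext" where
  "basis_vec i = (\<lambda>S. if S = {i} then 1 else 0)"

definition is_subsp :: "'a::field ext set \<Rightarrow> bool" where
  "is_subsp W \<longleftrightarrow> vzero \<in> W \<and> (\<forall>x\<in>W. \<forall>y\<in>W. vadd x y \<in> W) \<and>
     (\<forall>c. \<forall>x\<in>W. vscale c x \<in> W)"

definition lspan :: "'a::field ext set \<Rightarrow> 'a ext set" where
  "lspan A = \<Inter>{W. is_subsp W \<and> A \<subseteq> W}"

definition decomp :: "nat \<Rightarrow> nat \<Rightarrow> nat \<Rightarrow> 'a::field ext \<Rightarrow> 'a ext \<times> 'a ext" where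
  "decomp n k j m = (THE p. fst p \<in> Extkj n k j \<and> snd p \<in> Extkj n (k - 1) j \<and>
       m = vadd (fst p) (wedge (basis_vec j) (snd p)))"

definition slow_shift :: "nat \<Rightarrow> nat \<Rightarrow> nat \<Rightarrow> nat \<Rightarrow> 'a::field ext \<Rightarrow> 'a ext" where
  "slow_shift n k j i m = (let (x', y') = decomp n k j m;
       z = vadd x' (wedge (basis_vec i) y')
     in if z \<noteq> vzero then z else wedge (basis_vec j) y')"

definition slow_shift_sp :: "nat \<Rightarrow> nat \<Rightarrow> nat \<Rightarrow> nat \<Rightarrow> 'a::field ext set \<Rightarrow> 'a ext set" where
  "slow_shift_sp n k j i L = lspan {slow_shift n k j i m | m. m \<in> L \<and> m \<noteq> vzero}"

end

theory Submission
  imports Defs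
begin

lemma wedge_basis_at:
  "wedge (basis_vec j) y U = (if finite U \<and> j \<in> U then wsign {j} (U - {j}) * y (U - {j}) else (0::'a::field))"
proof (cases "finite U")
  case True
  have "wedge (basis_vec j) y U = (\<Sum>S\<in>Pow U. if S = {j} then wsign S (U - S) * y (U - S) else 0)"
    unfolding wedge_def basis_vec_def by (rule sum.cong) auto
  also have "\<dots> = (if {j} \<in> Pow U then wsign {j} (U - {j}) * y (U - {j}) else 0)"
    using True by (subst sum.delta) auto
  finally show ?thesis using True by auto
next
  case False
  then show ?thesis unfolding wedge_def by simp
qed

lemma wsign_nz: "wsign S T \<noteq> (0::'a::field)"
  unfolding wsign_def by simp

lemma Ext_fin: "y \<in> Ext n \<Longrightarrow> y S \<noteq> 0 \<Longrightarrow> finite S"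
  unfolding Ext_def by (auto intro: finite_subset)

lemma Extkj_D: "y \<in> Extkj n k j \<Longrightarrow> y S \<noteq> 0 \<Longrightarrow> j \<notin> S \<and> finite S"
  unfolding Extkj_def Extk_def using Ext_fin by blast

lemma wedge_j_inj:
  assumes "y \<in> Extkj n k j" "y' \<in> Extkj n k j"
    and eq: "wedge (basis_vec j) y = wedge (basis_vec j) (y'::'a::field ext)"
  shows "y = y'"
proof
  fix S
  show "y S = y' S"
  proof (cases "j \<in> S \<or> infinite S")
    case True
    have "y S = 0" "y' S = 0" using Extkj_D[OF assms(1), of S] Extkj_D[OF assms(2), of S] True by blast+
    then show ?thesis by simp
  next
    case False
    have "wedge (basis_vec j) y (insert j S) = wedge (basis_vec j) y' (insert j S)"
      using eq by simp
    then have "wsign {j} S * y S = wsign {j} S * y' S"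
      using False by (simp add: wedge_basis_at)
    then show ?thesis using wsign_nz by auto
  qed
qed

lemma decomp_eq:
  assumes a: "a \<in> Extkj n k j" and y: "y \<in> Extkj n (k - 1) j"
  shows "decomp n k j (vadd a (wedge (basis_vec j) y)) = ((a, y)::'a::field ext \<times> 'a ext)"
  unfolding decomp_def
proof (rule the_equality)
  show "fst (a, y) \<in> Extkj n k j \<and> snd (a, y) \<in> Extkj n (k - 1) j \<and>
    vadd a (wedge (basis_vec j) y) = vadd (fst (a, y)) (wedge (basis_vec j) (snd (a, y)))"
    using a y by simp
next
  fix p :: "'a ext \<times> 'a ext"
  assume p: "fst p \<in> Extkj n k j \<and> snd p \<in> Extkj n (k - 1) j \<and>
       vadd a (wedge (basis_vec j) y) = vadd (fst p) (wedge (basis_vec j) (snd p))"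
  have e: "\<And>S. a S + wedge (basis_vec j) y S = fst p S + wedge (basis_vec j) (snd p) S"
    using p unfolding vadd_def by metis
  have fa: "fst p = a"
  proof
    fix S
    show "fst p S = a S"
    proof (cases "j \<in> S")
      case True
      have "a S = 0" "fst p S = 0" using Extkj_D[OF a, of S] Extkj_D[of "fst p" n k j S] p True by blast+
      then show ?thesis by simp
    next
      case False
      then show ?thesis using e[of S] by (simp add: wedge_basis_at)
    qed
  qed
  have "wedge (basis_vec j) y = wedge (basis_vec j) (snd p)"
  proof
    fix S show "wedge (basis_vec j) y S = wedge (basis_vec j) (snd p) S"
      using e[of S] fa by simp
  qed
  then have "snd p = y" using wedge_j_inj[OF y] p by metis
  with fa show "p = (a, y)" by (cases p) simp
qed

lemma lspan_sub: "is_subsp W \<Longrightarrow> A \<subseteq> W \<Longrightarrow> lspan A \<subseteq> W"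
  unfolding lspan_def by blast

lemma lspan_in: "x \<in> A \<Longrightarrow> x \<in> lspan A"
  unfolding lspan_def by blast

lemma lspan_zero: "vzero \<in> lspan A"
  unfolding lspan_def is_subsp_def by blast

theorem corollary3p6:
  fixes L :: "'a::field ext set" and n k i j :: nat
  assumes char: "(2::'a) \<noteq> 0"
    and subsp: "is_subsp L" and LsubExt: "L \<subseteq> Extk n k"
    and ij: "1 \<le> i" "i < j" "j \<le> n"
    and monomial: "L = {vadd a b | a b. a \<in> L \<inter> Extkj n k j \<and>
        b \<in> L \<inter> {wedge (basis_vec j) y | y. y \<in> Extkj n (k - 1) j}}"
  shows "\<forall>x \<in> Extkj n (k - 1) j.
           wedge (basis_vec j) x \<in> slow_shift_sp n k j i L \<longrightarrow>
           wedge (basis_vec i) x \<in> slow_shift_sp n k j i L"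
proof (intro ballI impI)
  fix x assume x: "x \<in> Extkj n (k - 1) j"
    and xin: "wedge (basis_vec j) x \<in> slow_shift_sp n k j i L"
  define P :: "'a ext \<Rightarrow> 'a ext" where "P z = (\<lambda>S. if j \<in> S then z S else 0)" for z
  define W where "W = {z. P z \<in> L}"
  have vz: "vzero \<in> L" and vadd: "\<And>a b. a \<in> L \<Longrightarrow> b \<in> L \<Longrightarrow> vadd a b \<in> L"
    and vsc: "\<And>c a. a \<in> L \<Longrightarrow> vscale c a \<in> L"
    using subsp unfolding is_subsp_def by auto
  have PW: "is_subsp W"
  proof -
    have "P vzero = vzero" unfolding P_def vzero_def by auto
    moreover have "\<And>a b. P (vadd a b) = vadd (P a) (P b)" unfolding P_def vadd_def by auto
    moreover have "\<And>c a. P (vscale c a) = vscale c (P a)" unfolding P_def vscale_def by auto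
    ultimately show ?thesis unfolding is_subsp_def W_def using vz vadd vsc by auto
  qed
  have Pwj: "\<And>y. (\<forall>S. y S \<noteq> 0 \<longrightarrow> j \<notin> S) \<Longrightarrow> P (wedge (basis_vec j) y) = wedge (basis_vec j) y"
    unfolding P_def by (auto simp: wedge_basis_at)
  have gen: "{slow_shift n k j i m | m. m \<in> L \<and> m \<noteq> vzero} \<subseteq> W"
  proof
    fix g assume "g \<in> {slow_shift n k j i m | m. m \<in> L \<and> m \<noteq> vzero}"
    then obtain m where m: "m \<in> L" "m \<noteq> vzero" and g: "g = slow_shift n k j i m" by blast
    from m(1) obtain a y where a: "a \<in> L" "a \<in> Extkj n k j" and b: "wedge (basis_vec j) y \<in> L"
      and y: "y \<in> Extkj n (k - 1) j" and mdef: "m = vadd a (wedge (basis_vec j) y)"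
      using monomial by blast
    have dec: "decomp n k j m = (a, y)" using decomp_eq[OF a(2) y] mdef by simp
    have Pz: "P (vadd a (wedge (basis_vec i) y)) = vzero"
    proof
      fix S
      show "P (vadd a (wedge (basis_vec i) y)) S = vzero S"
      proof (cases "j \<in> S")
        case True
        have "a S = 0" using Extkj_D[OF a(2), of S] True by auto
        moreover have "wedge (basis_vec i) y S = 0"
          using Extkj_D[OF y, of "S - {i}"] True ij by (auto simp: wedge_basis_at)
        ultimately show ?thesis unfolding P_def vadd_def vzero_def by simp
      next
        case False then show ?thesis unfolding P_def vzero_def by simp
      qed
    qed
    have Py: "P (wedge (basis_vec j) y) = wedge (basis_vec j) y"
      using Pwj Extkj_D[OF y] by blast
    show "g \<in> W"
      unfolding g slow_shift_def dec W_def using Pz Py vz b by (simp add: Let_def)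
  qed
  have NW: "slow_shift_sp n k j i L \<subseteq> W"
    unfolding slow_shift_sp_def by (rule lspan_sub[OF PW gen])
  have xjf: "\<forall>S. x S \<noteq> 0 \<longrightarrow> j \<notin> S" using Extkj_D[OF x] by blast
  have mL: "wedge (basis_vec j) x \<in> L"
    using NW xin Pwj[OF xjf] unfolding W_def by auto
  have vzk: "vzero \<in> Extkj n k j" for k
    unfolding Extkj_def Extk_def Ext_def vzero_def by simp
  show "wedge (basis_vec i) x \<in> slow_shift_sp n k j i L"
  proof (cases "wedge (basis_vec j) x = vzero")
    case True
    have "wedge (basis_vec j) x = wedge (basis_vec j) vzero"
      using True unfolding vzero_def wedge_def by simp
    then have "x = vzero" using wedge_j_inj[OF x vzk] by blast
    then have "wedge (basis_vec i) x = vzero" unfolding vzero_def wedge_def by simp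
    then show ?thesis using lspan_zero unfolding slow_shift_sp_def by simp
  next
    case False
    have mm: "wedge (basis_vec j) x = vadd vzero (wedge (basis_vec j) x)"
      unfolding vadd_def vzero_def by simp
    have dec: "decomp n k j (wedge (basis_vec j) x) = (vzero, x)"
      using decomp_eq[OF vzk x] mm by metis
    have vi: "vadd vzero (wedge (basis_vec i) x) = wedge (basis_vec i) x"
      unfolding vadd_def vzero_def by simp
    have ss: "slow_shift n k j i (wedge (basis_vec j) x) = (if wedge (basis_vec i) x \<noteq> vzero then wedge (basis_vec i) x else wedge (basis_vec j) x)"
      unfolding slow_shift_def dec by (simp add: vi Let_def)
    have "slow_shift n k j i (wedge (basis_vec j) x) \<in> slow_shift_sp n k j i L"
      unfolding slow_shift_sp_def using mL False by (intro lspan_in) blast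
    then show ?thesis
      using lspan_zero[of "{slow_shift n k j i m | m. m \<in> L \<and> m \<noteq> vzero}"]
      unfolding slow_shift_sp_def ss
      by (cases "wedge (basis_vec i) x = vzero") auto
  qed
qed

end
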